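(* Let $G$ be a partial cube in which every convex cycle is a $6$-cycle, and let $P=v_0v_1\cdots v_l$ ($l\geqslant 3$) be a path in $G$. If $P$ is of type-II, then $P$ is a shortest $v_0,v_l$-path (geodesic) in $G$.
   Context: A partial cube is a connected graph isomorphic to an isometric subgraph of a hypercube. A subgraph $H$ is convex if for all $u,v\in V(H)$ every shortest $u,v$-path of $G$ lies in $H$; a convex cycle is a cycle that is a convex subgraph. The Djoković–Winkler relation $\Theta$ on edges: $uv\,\Theta\,xy$ iff $d(u,x)+d(v,y)\neq d(u,y)+d(v,x)$; in a partial cube it is an equivalence relation, and $F_e$ denotes the $\Theta$-class of edge $e$. For a vertex $v$, $\mathcal{F}(v)=\{F_e: e \text{ is an edge incident with } v\}$. With $e_i=v_{i-1}v_i$ ($1\leqslant i\leqslant l$), the path $P=v_0v_1\cdots v_l$ ($l\geqslant 3$) is of type-II if for every $1\leqslant i\leqslant l-2$: $F_{e_i}\notin\mathcal{F}(v_{i+2})$ and $F_{e_{i+2}}\notin\mathcal{F}(v_{i-1})$. *)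

theory Defs
  imports Main
begin

definition graph :: "'a set \<Rightarrow> ('a \<Rightarrow> 'a \<Rightarrow> bool) \<Rightarrow> bool" where
  "graph V E \<longleftrightarrow> (\<forall>u v. E u v \<longrightarrow> u \<in> V \<and> v \<in> V) \<and> (\<forall>u v. E u v \<longrightarrow> E v u) \<and> (\<forall>u. \<not> E u u)"

definition is_walk :: "'a set \<Rightarrow> ('a \<Rightarrow> 'a \<Rightarrow> bool) \<Rightarrow> 'a list \<Rightarrow> bool" where
  "is_walk V E xs \<longleftrightarrow> xs \<noteq> [] \<and> set xs \<subseteq> V \<and> (\<forall>i. Suc i < length xs \<longrightarrow> E (xs ! i) (xs ! Suc i))"

text \<open>Paths: walks with pairwise distinct vertices; the length of a path is length xs - 1.\<close>
definition is_path :: "'a set \<Rightarrow> ('a \<Rightarrow> 'a \<Rightarrow> bool) \<Rightarrow> 'a list \<Rightarrow> bool" where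
  "is_path V E xs \<longleftrightarrow> is_walk V E xs \<and> distinct xs"

definition connected_graph :: "'a set \<Rightarrow> ('a \<Rightarrow> 'a \<Rightarrow> bool) \<Rightarrow> bool" where
  "connected_graph V E \<longleftrightarrow> (\<forall>u\<in>V. \<forall>v\<in>V. \<exists>xs. is_walk V E xs \<and> hd xs = u \<and> last xs = v)"

definition gdist :: "'a set \<Rightarrow> ('a \<Rightarrow> 'a \<Rightarrow> bool) \<Rightarrow> 'a \<Rightarrow> 'a \<Rightarrow> nat" where
  "gdist V E u v = (LEAST n. \<exists>xs. is_walk V E xs \<and> hd xs = u \<and> last xs = v \<and> length xs = Suc n)"

definition shortest_path :: "'a set \<Rightarrow> ('a \<Rightarrow> 'a \<Rightarrow> bool) \<Rightarrow> 'a \<Rightarrow> 'a \<Rightarrow> 'a list \<Rightarrow> bool" where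
  "shortest_path V E u v xs \<longleftrightarrow> is_path V E xs \<and> hd xs = u \<and> last xs = v \<and> length xs = Suc (gdist V E u v)"

text \<open>Partial cube: connected graph isometrically embeddable into a hypercube
  (vertices = finite subsets of an index set, here nat; distance = size of symmetric difference).\<close>
definition partial_cube :: "'a set \<Rightarrow> ('a \<Rightarrow> 'a \<Rightarrow> bool) \<Rightarrow> bool" where
  "partial_cube V E \<longleftrightarrow> graph V E \<and> connected_graph V E \<and>
     (\<exists>f :: 'a \<Rightarrow> nat set. (\<forall>v\<in>V. finite (f v)) \<and> inj_on f V \<and>
        (\<forall>u\<in>V. \<forall>v\<in>V. gdist V E u v = card ((f u - f v) \<union> (f v - f u))))"

definition convex_sub :: "'a set \<Rightarrow> ('a \<Rightarrow> 'a \<Rightarrow> bool) \<Rightarrow> 'a set \<Rightarrow> 'a set set \<Rightarrow> bool" where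
  "convex_sub V E VH EH \<longleftrightarrow> (\<forall>u\<in>VH. \<forall>v\<in>VH. \<forall>xs. shortest_path V E u v xs \<longrightarrow>
      set xs \<subseteq> VH \<and> (\<forall>i. Suc i < length xs \<longrightarrow> {xs ! i, xs ! Suc i} \<in> EH))"

definition is_cycle :: "'a set \<Rightarrow> ('a \<Rightarrow> 'a \<Rightarrow> bool) \<Rightarrow> 'a list \<Rightarrow> bool" where
  "is_cycle V E cs \<longleftrightarrow> length cs \<ge> 3 \<and> distinct cs \<and> set cs \<subseteq> V \<and>
     (\<forall>i < length cs. E (cs ! i) (cs ! (Suc i mod length cs)))"

definition cycle_edges :: "'a list \<Rightarrow> 'a set set" where
  "cycle_edges cs = {{cs ! i, cs ! (Suc i mod length cs)} | i. i < length cs}"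

definition convex_cycle :: "'a set \<Rightarrow> ('a \<Rightarrow> 'a \<Rightarrow> bool) \<Rightarrow> 'a list \<Rightarrow> bool" where
  "convex_cycle V E cs \<longleftrightarrow> is_cycle V E cs \<and> convex_sub V E (set cs) (cycle_edges cs)"

definition Theta :: "'a set \<Rightarrow> ('a \<Rightarrow> 'a \<Rightarrow> bool) \<Rightarrow> 'a \<times> 'a \<Rightarrow> 'a \<times> 'a \<Rightarrow> bool" where
  "Theta V E e f \<longleftrightarrow> (case e of (u, v) \<Rightarrow> case f of (x, y) \<Rightarrow>
      gdist V E u x + gdist V E v y \<noteq> gdist V E u y + gdist V E v x)"

text \<open>Theta-class F_e of an edge e (containing both orientations of each edge).\<close>
definition Fclass :: "'a set \<Rightarrow> ('a \<Rightarrow> 'a \<Rightarrow> bool) \<Rightarrow> 'a \<times> 'a \<Rightarrow> ('a \<times> 'a) set" where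
  "Fclass V E e = {(x, y). E x y \<and> Theta V E e (x, y)}"

definition Fvert :: "'a set \<Rightarrow> ('a \<Rightarrow> 'a \<Rightarrow> bool) \<Rightarrow> 'a \<Rightarrow> ('a \<times> 'a) set set" where
  "Fvert V E v = {Fclass V E (v, w) | w. E v w}"

text \<open>Type-II path P = v_0 ... v_l (l >= 3), e_i = v_{i-1} v_i; list index k holds v_k.\<close>
definition type_II :: "'a set \<Rightarrow> ('a \<Rightarrow> 'a \<Rightarrow> bool) \<Rightarrow> 'a list \<Rightarrow> bool" where
  "type_II V E p \<longleftrightarrow> is_path V E p \<and> length p \<ge> 4 \<and>
     (\<forall>i. 1 \<le> i \<and> i \<le> length p - 3 \<longrightarrow>
        Fclass V E (p ! (i - 1), p ! i) \<notin> Fvert V E (p ! (i + 2)) \<and>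
        Fclass V E (p ! (i + 1), p ! (i + 2)) \<notin> Fvert V E (p ! (i - 1)))"

end

theory Submission
  imports Defs
begin

definition sd :: "nat set \<Rightarrow> nat set \<Rightarrow> nat set" where
  "sd A B = (A - B) \<union> (B - A)"

fun PP :: "nat set \<Rightarrow> (nat \<Rightarrow> nat) \<Rightarrow> nat \<Rightarrow> nat set" where
  "PP X g 0 = X"
| "PP X g (Suc k) = sd (PP X g k) {g k}"

lemma sd_sd_same[simp]: "sd (sd X {d}) {d} = X"
  by (auto simp: sd_def)

lemma sd_ins: "x \<notin> S \<Longrightarrow> sd (sd P S) {x} = sd P (insert x S)"
  by (auto simp: sd_def)

lemma sd_del: "x \<notin> S \<Longrightarrow> sd (sd P (insert x S)) {x} = sd P S"
  by (auto simp: sd_def)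

lemma sd_empty[simp]: "sd P {} = P"
  by (auto simp: sd_def)

lemma sd_cancel[simp]: "sd X (sd X S) = S"
  by (auto simp: sd_def)

lemma sd_comm2: "sd (sd X {a}) {b} = sd (sd X {b}) {a}"
  by (auto simp: sd_def)

lemma sd_eq_self: "sd X S = X \<Longrightarrow> S = {}"
  by (auto simp: sd_def)

lemma PP_range:
  assumes "inj_on g {a..<a+k}"
  shows "PP X g (a+k) = sd (PP X g a) (g ` {a..<a+k})"
  using assms
proof (induction k)
  case 0
  then show ?case by simp
next
  case (Suc k)
  have inj: "inj_on g {a..<a+k}" using Suc.prems by (rule inj_on_subset) simp
  have nin: "g (a+k) \<notin> g ` {a..<a+k}"
  proof
    assume "g (a+k) \<in> g ` {a..<a+k}"
    then obtain x where x: "x \<in> {a..<a+k}" "g (a+k) = g x" by auto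
    have "a + k = x" by (rule inj_onD[OF Suc.prems x(2)]) (use x(1) in auto)
    then show False using x by auto
  qed
  have im: "g ` {a..<a+Suc k} = insert (g (a+k)) (g ` {a..<a+k})"
    by (simp add: atLeastLessThanSuc)
  have "PP X g (a + Suc k) = sd (PP X g (a+k)) {g (a+k)}" by simp
  also have "\<dots> = sd (sd (PP X g a) (g ` {a..<a+k})) {g (a+k)}" using Suc.IH[OF inj] by simp
  also have "\<dots> = sd (PP X g a) (g ` {a..<a+Suc k})" using sd_ins[OF nin] im by simp
  finally show ?case .
qed

lemma PP_shift: "PP X g (a + k) = PP (PP X g a) (\<lambda>i. g (i + a)) k"
  by (induction k) (auto simp: add.commute)

lemma PP_prep: "PP (sd X {d}) (\<lambda>k. if k = 0 then d else g (k-1)) (Suc k) = PP X g k"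
  by (induction k) auto

lemma PP_cong: "(\<forall>i<k. g i = g' i) \<Longrightarrow> PP X g k = PP X g' k"
  by (induction k) auto

lemma mod_inj: "inj_on (\<lambda>x. x mod n) {k..<k+(n::nat)}"
proof (rule inj_onI)
  fix x y assume x: "x \<in> {k..<k+n}" and y: "y \<in> {k..<k+n}" and e: "x mod n = y mod n"
  show "x = y"
  proof (rule ccontr)
    assume ne: "x \<noteq> y"
    { fix a b :: nat assume ab: "a < b" "a \<in> {k..<k+n}" "b \<in> {k..<k+n}" "a mod n = b mod n"
      then have "n dvd b - a" using mod_eq_dvd_iff_nat[of a b n] by simp
      moreover have "0 < b - a" "b - a < n" using ab by auto
      ultimately have False using nat_dvd_not_less by blast }
    then show False using x y e ne by (metis linorder_neqE_nat)
  qed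
qed

lemma mod_cover:
  assumes "0 < (n::nat)"
  shows "(\<lambda>x. x mod n) ` {k..<k+n} = {0..<n}"
proof -
  have sub: "(\<lambda>x. x mod n) ` {k..<k+n} \<subseteq> {0..<n}" using assms by auto
  have "card ((\<lambda>x. x mod n) ` {k..<k+n}) = n" using card_image[OF mod_inj] by simp
  then show ?thesis using card_subset_eq[OF _ sub] by simp
qed

definition prep :: "nat \<Rightarrow> (nat \<Rightarrow> nat) \<Rightarrow> nat \<Rightarrow> nat" where
  "prep d g k = (if k = 0 then d else g (k-1))"

lemma prep_0[simp]: "prep d g 0 = d" and prep_Suc[simp]: "prep d g (Suc k) = g k"
  by (simp_all add: prep_def)

lemma PP_prep2: "PP (sd X {d}) (prep d g) (Suc k) = PP X g k"
  by (induction k) auto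

lemma inj_prep1: "inj_on g A \<Longrightarrow> inj_on (prep d g) (Suc ` A)"
  by (auto simp: inj_on_def)

lemma inj_prep0: "inj_on g A \<Longrightarrow> d \<notin> g ` A \<Longrightarrow> inj_on (prep d g) (insert 0 (Suc ` A))"
  by (auto simp: inj_on_def)

lemma ivl0: "{0..<Suc m} = insert 0 (Suc ` {0..<m})"
  using lessThan_Suc_eq_insert_0[of m] by (simp add: atLeast0LessThan)

lemma ivl1: "{Suc a..<Suc b} = Suc ` {a..<b}"
  by (simp add: image_Suc_atLeastLessThan)

lemma sd_sd_set[simp]: "sd (sd P A) A = P"
  by (auto simp: sd_def)

lemma per_shift: "\<forall>k. (h::nat\<Rightarrow>nat) k = h (k mod n) \<Longrightarrow> h (a + n) = h (a::nat)"
  by (metis mod_add_self2)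

lemma per_cov:
  assumes n0: "0 < (n::nat)" and hp: "\<forall>k. (h::nat\<Rightarrow>nat) k = h (k mod n)"
  shows "h ` {k..<k+n} = h ` {0..<n}"
proof -
  have "h ` {k..<k+n} = (\<lambda>x. h (x mod n)) ` {k..<k+n}"
    by (rule image_cong[OF refl]) (use hp in blast)
  also have "\<dots> = h ` ((\<lambda>x. x mod n) ` {k..<k+n})" by (simp add: image_image)
  also have "\<dots> = h ` {0..<n}" using mod_cover[OF n0, of k] by simp
  finally show ?thesis .
qed

lemma per_inj:
  assumes n0: "0 < (n::nat)" and hp: "\<forall>k. (h::nat\<Rightarrow>nat) k = h (k mod n)" and inj: "inj_on h {0..<n}"
  shows "inj_on h {k..<k+n}"
proof (rule inj_onI)
  fix x y assume x: "x \<in> {k..<k+n}" and y: "y \<in> {k..<k+n}" and e: "h x = h y"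
  have "h (x mod n) = h (y mod n)" using e hp by metis
  then have "x mod n = y mod n" by (rule inj_onD[OF inj]) (use n0 in auto)
  then show "x = y" using inj_onD[OF mod_inj _ x y] by simp
qed

lemma per_PP:
  assumes n0: "0 < (n::nat)" and hp: "\<forall>k. (h::nat\<Rightarrow>nat) k = h (k mod n)" and inj: "inj_on h {0..<n}"
  shows "PP X h (k + n) = sd (PP X h k) (h ` {0..<n})"
  using PP_range[OF per_inj[OF n0 hp inj, of k], of X] per_cov[OF n0 hp, of k] by simp

lemma per_PP2:
  assumes n0: "0 < (n::nat)" and hp: "\<forall>k. (h::nat\<Rightarrow>nat) k = h (k mod n)" and inj: "inj_on h {0..<n}"
  shows "PP X h (k + 2*n) = PP X h k"
proof -
  have "PP X h (k + 2*n) = PP X h ((k + n) + n)" by (simp add: mult_2 add.assoc)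
  also have "\<dots> = PP X h k" using per_PP[OF assms, of X "k+n"] per_PP[OF assms, of X k] by simp
  finally show ?thesis .
qed

lemma per_PPmod:
  assumes n0: "0 < (n::nat)" and hp: "\<forall>k. (h::nat\<Rightarrow>nat) k = h (k mod n)" and inj: "inj_on h {0..<n}"
  shows "PP X h k = PP X h (k mod (2*n))"
proof -
  have Pq: "PP X h (r + q*(2*n)) = PP X h r" for r q
  proof (induction q)
    case 0 then show ?case by simp
  next
    case (Suc q)
    have "PP X h (r + Suc q * (2*n)) = PP X h ((r + q*(2*n)) + 2*n)"
      by (rule arg_cong[where f="PP X h"]) simp
    also have "\<dots> = PP X h (r + q*(2*n))" by (rule per_PP2[OF assms])
    finally show ?case using Suc.IH by simp
  qed
  show ?thesis using Pq[of "k mod (2*n)" "k div (2*n)"] by (simp only: mod_div_mult_eq)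
qed

lemma per_ne:
  assumes n0: "0 < (n::nat)" and hp: "\<forall>k. (h::nat\<Rightarrow>nat) k = h (k mod n)" and inj: "inj_on h {0..<n}"
    and k: "0 < k" "k \<le> n"
  shows "PP X h (a + k) \<noteq> PP X h a"
proof
  assume e: "PP X h (a + k) = PP X h a"
  have "inj_on h {a..<a+k}" by (rule inj_on_subset[OF per_inj[OF n0 hp inj, of a]]) (use k in auto)
  then have "PP X h (a + k) = sd (PP X h a) (h ` {a..<a+k})" by (rule PP_range)
  then have "h ` {a..<a+k} = {}" using e sd_eq_self by metis
  then show False using k by auto
qed

lemma per_range:
  assumes hp: "\<forall>k. (h::nat\<Rightarrow>nat) k = h (k mod n)" and n0: "0 < (n::nat)"
  shows "sd X (PP X h k) \<subseteq> h ` {0..<n}"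
proof (induction k)
  case 0 then show ?case by (simp add: sd_def)
next
  case (Suc k)
  have "h k \<in> h ` {0..<n}" using hp n0 by (metis atLeastLessThan_iff image_eqI le0 mod_less_divisor)
  moreover have "sd X (PP X h (Suc k)) \<subseteq> sd X (PP X h k) \<union> {h k}" by (auto simp: sd_def)
  ultimately show ?case using Suc.IH by blast
qed

locale wfam =
  fixes W :: "nat set set"
  assumes step: "X \<in> W \<Longrightarrow> Z \<in> W \<Longrightarrow> X \<noteq> Z \<Longrightarrow> \<exists>d \<in> sd X Z. sd X {d} \<in> W"
  and cyc: "\<lbrakk> 2 \<le> n; \<forall>k. h k = h (k mod n); inj_on h {0..<n}; \<forall>k. PP X h k \<in> W;
             \<forall>j d. d \<in> h ` {0..<n} \<longrightarrow> sd (PP X h j) {d} \<in> W \<longrightarrow> d = h j \<or> d = h (j + n - 1) \<rbrakk>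
             \<Longrightarrow> n = 3"
begin

definition bad :: "nat set \<Rightarrow> (nat \<Rightarrow> nat) \<Rightarrow> nat \<Rightarrow> bool" where
  "bad X g s \<longleftrightarrow> 3 \<le> s \<and> g 0 = g (s-1) \<and> inj_on g {0..<s-1} \<and> inj_on g {1..<s}
     \<and> (\<forall>k\<le>s. PP X g k \<in> W)"

definition viol :: "nat set \<Rightarrow> (nat \<Rightarrow> nat) \<Rightarrow> nat \<Rightarrow> bool" where
  "viol X g j \<longleftrightarrow> sd (PP X g (j+2)) {g (j-1)} \<in> W \<or> sd (PP X g (j-1)) {g (j+1)} \<in> W"

definition fLT :: "nat set \<Rightarrow> (nat \<Rightarrow> nat) \<Rightarrow> nat \<Rightarrow> bool" where
  "fLT X g s \<longleftrightarrow> (\<forall>j. 1 \<le> j \<and> j \<le> s-2 \<longrightarrow> \<not> viol X g j)"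

definition Aprop :: "nat \<Rightarrow> bool" where
  "Aprop s \<longleftrightarrow> (\<forall>X g. bad X g s \<longrightarrow> (\<exists>j. 2 \<le> j \<and> j \<le> s-2 \<and> viol X g j))"

lemma C4:
  assumes "X \<in> W" "a \<noteq> b" "sd X {a} \<in> W" "sd X {b} \<in> W" "sd (sd X {a}) {b} \<in> W"
  shows False
proof -
  define h where "h = (\<lambda>k::nat. if k mod 2 = 0 then a else b)"
  have hp: "\<forall>k. h k = h (k mod 2)" by (auto simp: h_def)
  have inj: "inj_on h {0..<2}" using assms(2) by (auto simp: h_def inj_on_def less_Suc_eq)
  have PPf: "PP X h k = (if k mod 4 = 0 then X else if k mod 4 = 1 then sd X {a}
       else if k mod 4 = 2 then sd (sd X {a}) {b} else sd X {b})" for k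
  proof (induction k)
    case 0 then show ?case by simp
  next
    case (Suc k)
    have h0: "k mod 2 = 0 \<Longrightarrow> h k = a" and h1: "k mod 2 = 1 \<Longrightarrow> h k = b" by (auto simp: h_def)
    have e1: "sd (sd (sd X {a}) {b}) {a} = sd X {b}" by (auto simp: sd_def)
    have "k mod 4 = 0 \<or> k mod 4 = 1 \<or> k mod 4 = 2 \<or> k mod 4 = 3" by presburger
    then show ?case
    proof (elim disjE)
      assume 1: "k mod 4 = 0"
      then have "Suc k mod 4 = 1" "k mod 2 = 0" by presburger+
      then show ?thesis using Suc.IH 1 h0 by simp
    next
      assume 2: "k mod 4 = 1"
      then have "Suc k mod 4 = 2" "k mod 2 = 1" by presburger+
      then show ?thesis using Suc.IH 2 h1 by simp
    next
      assume 3: "k mod 4 = 2"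
      then have "Suc k mod 4 = 3" "k mod 2 = 0" by presburger+
      then show ?thesis using Suc.IH 3 h0 e1 by simp
    next
      assume 4: "k mod 4 = 3"
      then have "Suc k mod 4 = 0" "k mod 2 = 1" by presburger+
      then show ?thesis using Suc.IH 4 h1 by simp
    qed
  qed
  have allW: "\<forall>k. PP X h k \<in> W" using assms by (simp add: PPf)
  have N: "\<forall>j d. d \<in> h ` {0..<2} \<longrightarrow> sd (PP X h j) {d} \<in> W \<longrightarrow> d = h j \<or> d = h (j + 2 - 1)"
  proof (intro allI impI)
    fix j :: nat and d assume "d \<in> h ` {0..<2}"
    then have "d = a \<or> d = b" by (auto simp: h_def)
    moreover have "j mod 2 = 0 \<or> j mod 2 = 1" by presburger
    moreover have "j mod 2 = 0 \<Longrightarrow> Suc j mod 2 = 1" by presburger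
    moreover have "j mod 2 = 1 \<Longrightarrow> Suc j mod 2 = 0" by presburger
    ultimately show "d = h j \<or> d = h (j + 2 - 1)" by (auto simp: h_def)
  qed
  have "(2::nat) = 3" by (rule cyc[OF _ hp inj allW N]) simp
  then show False by simp
qed

lemma bad3: "bad X g 3 \<Longrightarrow> False"
proof -
  assume b: "bad X g 3"
  then have g02: "g 0 = g 2" and inj: "inj_on g {0..<2}" and W: "\<forall>k\<le>3. PP X g k \<in> W"
    by (auto simp: bad_def)
  have ne: "g 0 \<noteq> g 1" using inj_onD[OF inj, of 0 1] by auto
  have p0: "PP X g 0 = X" and p1: "PP X g 1 = sd X {g 0}" and p2: "PP X g 2 = sd (sd X {g 0}) {g 1}"
    by (simp_all add: eval_nat_numeral)
  have "PP X g 3 = sd (sd (sd X {g 0}) {g 1}) {g 2}" by (simp add: eval_nat_numeral)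
  also have "\<dots> = sd X {g 1}" unfolding g02[symmetric] by (auto simp: sd_def)
  finally have p3: "PP X g 3 = sd X {g 1}" .
  have w: "PP X g 0 \<in> W" "PP X g 1 \<in> W" "PP X g 2 \<in> W" "PP X g 3 \<in> W"
    using W[rule_format, of 0] W[rule_format, of 1] W[rule_format, of 2] W[rule_format, of 3] by (simp_all del: PP.simps)
  show False
    by (rule C4[OF _ ne, of X]) (use w in \<open>simp_all only: p0 p1 p2 p3\<close>)
qed

lemma bad_PP_s:
  assumes "bad X g s"
  shows "PP X g s = sd X (g ` {1..<s-1})"
proof -
  have s3: "3 \<le> s" and g0: "g 0 = g (s-1)" and inj: "inj_on g {0..<s-1}"
    using assms by (auto simp: bad_def)
  have a: "PP X g (s-1) = sd X (g ` {0..<s-1})" using PP_range[of g 0 "s-1" X] inj by simp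
  have im: "g ` {0..<s-1} = insert (g 0) (g ` {1..<s-1})"
  proof -
    have "{0..<s-1} = insert 0 {1..<s-1}" using s3 by auto
    then show ?thesis by simp
  qed
  have nin: "g 0 \<notin> g ` {1..<s-1}"
  proof
    assume "g 0 \<in> g ` {1..<s-1}"
    then obtain x where x: "x \<in> {1..<s-1}" "g 0 = g x" by auto
    have "0 = x" by (rule inj_onD[OF inj x(2)]) (use x(1) s3 in auto)
    then show False using x by auto
  qed
  have "PP X g s = sd (PP X g (s-1)) {g (s-1)}" using s3 by (cases s) auto
  then show ?thesis using a im nin g0 sd_del by simp
qed

lemma bad_ne: "bad X g s \<Longrightarrow> X \<noteq> PP X g s"
proof
  assume b: "bad X g s" and e: "X = PP X g s"
  then have "sd X (g ` {1..<s-1}) = X" using bad_PP_s[OF b] by simp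
  then have "g ` {1..<s-1} = {}" by (rule sd_eq_self)
  moreover have "3 \<le> s" using b by (simp add: bad_def)
  ultimately show False by auto
qed

lemma viol_prep:
  assumes "2 \<le> j"
  shows "viol (sd X {d}) (prep d g) j = viol X g (j-1)"
proof -
  have e1: "PP (sd X {d}) (prep d g) (j+2) = PP X g (j-1+2)"
    using PP_prep2[of X d g "j+1"] assms by (simp del: PP.simps add: numeral_2_eq_2)
  have jj: "j - 1 = Suc (j - 2)" "j - 1 - 1 = j - 2" using assms by arith+
  have e2: "PP (sd X {d}) (prep d g) (j-1) = PP X g (j-1-1)"
    unfolding jj(2) unfolding jj(1) using PP_prep2[of X d g "j-2"] .
  have e3: "prep d g (j-1) = g (j-1-1)" using assms by (simp add: prep_def)
  have e4: "prep d g (j+1) = g (j-1+1)" using assms by (simp add: prep_def)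
  show ?thesis unfolding viol_def e1 e2 e3 e4 ..
qed

lemma viol_shift:
  assumes "1 \<le> j"
  shows "viol (PP X g a) (\<lambda>i. g (i + a)) j = viol X g (j + a)"
proof -
  have e1: "PP (PP X g a) (\<lambda>i. g (i + a)) (j+2) = PP X g (j+a+2)"
    using PP_shift[of X g a "j+2"] by (simp del: PP.simps add: ac_simps)
  have e2: "PP (PP X g a) (\<lambda>i. g (i + a)) (j-1) = PP X g (j+a-1)"
    using PP_shift[of X g a "j-1"] assms by (simp del: PP.simps add: ac_simps)
  have e3: "j - 1 + a = j + a - 1" "j + 1 + a = j + a + 1" using assms by auto
  show ?thesis unfolding viol_def e1 e2 e3 ..
qed

lemma bad_prep:
  assumes b: "bad X g s" and q1: "1 \<le> q" and qs: "q < s - 1" and w: "sd X {g q} \<in> W"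
  shows "bad (sd X {g q}) (prep (g q) g) (q+2)"
proof -
  have inj: "inj_on g {0..<s-1}" and W: "\<forall>k\<le>s. PP X g k \<in> W" using b by (auto simp: bad_def)
  have injq: "inj_on g {0..<q+1}" by (rule inj_on_subset[OF inj]) (use qs in auto)
  have injq0: "inj_on g {0..<q}" by (rule inj_on_subset[OF inj]) (use qs in auto)
  have nin: "g q \<notin> g ` {0..<q}"
  proof
    assume "g q \<in> g ` {0..<q}"
    then obtain x where x: "x \<in> {0..<q}" "g q = g x" by auto
    have "q = x" by (rule inj_onD[OF inj x(2)]) (use x(1) qs in auto)
    then show False using x by auto
  qed
  have i0: "inj_on (prep (g q) g) {0..<q+2-1}"
    using inj_prep0[OF injq0 nin] ivl0[of q] by simp
  have i1: "inj_on (prep (g q) g) {1..<q+2}"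
    using inj_prep1[OF injq, of "g q"] ivl1[of 0 "q+1"] by simp
  have ww: "\<forall>k\<le>q+2. PP (sd X {g q}) (prep (g q) g) k \<in> W"
  proof (intro allI impI)
    fix k assume k: "k \<le> q+2"
    show "PP (sd X {g q}) (prep (g q) g) k \<in> W"
    proof (cases k)
      case 0 then show ?thesis using w by simp
    next
      case (Suc k')
      then have "PP (sd X {g q}) (prep (g q) g) k = PP X g k'" using PP_prep2 by simp
      moreover have "k' \<le> s" using k Suc qs by auto
      ultimately show ?thesis using W by simp
    qed
  qed
  show ?thesis unfolding bad_def using i0 i1 ww q1 by (simp add: prep_def)
qed

lemma inj_shift: "inj_on (g::nat\<Rightarrow>nat) {a..<a+m} \<Longrightarrow> inj_on (\<lambda>i. g (i + a)) {0..<m}"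
proof (rule inj_onI)
  fix x y assume inj: "inj_on g {a..<a+m}" and x: "x \<in> {0..<m}" and y: "y \<in> {0..<m}"
    and e: "g (x + a) = g (y + a)"
  have "x + a = y + a" by (rule inj_onD[OF inj e]) (use x y in auto)
  then show "x = y" by simp
qed

lemma bad_prep_gen:
  assumes m2: "2 \<le> m" and dm: "d = h (m-1)" and inj: "inj_on h {0..<m}"
    and nin: "d \<notin> h ` {0..<m-1}" and W: "\<forall>k\<le>m. PP Y h k \<in> W" and w: "sd Y {d} \<in> W"
  shows "bad (sd Y {d}) (prep d h) (m+1)"
proof -
  have inj0: "inj_on h {0..<m-1}" by (rule inj_on_subset[OF inj]) auto
  have eq: "m + 1 - 1 = Suc (m - 1)" using m2 by simp
  have eq2: "{0..<m+1-1} = insert 0 (Suc ` {0..<m-1})" unfolding eq by (rule ivl0)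
  have i0: "inj_on (prep d h) {0..<m+1-1}" unfolding eq2 by (rule inj_prep0[OF inj0 nin])
  have eq3: "{1..<m+1} = Suc ` {0..<m}" using ivl1[of 0 m] by simp
  have i1: "inj_on (prep d h) {1..<m+1}" unfolding eq3 by (rule inj_prep1[OF inj])
  have ww: "\<forall>k\<le>m+1. PP (sd Y {d}) (prep d h) k \<in> W"
  proof (intro allI impI)
    fix k assume k: "k \<le> m+1"
    show "PP (sd Y {d}) (prep d h) k \<in> W"
    proof (cases k)
      case 0 then show ?thesis using w by simp
    next
      case (Suc k')
      then have "PP (sd Y {d}) (prep d h) k = PP Y h k'" using PP_prep2 by simp
      moreover have "k' \<le> m" using k Suc by auto
      ultimately show ?thesis using W by simp
    qed
  qed
  have e: "prep d h (m + 1 - 1) = d" using dm m2 by (simp add: prep_def)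
  show ?thesis unfolding bad_def using i0 i1 ww m2 e by simp
qed

lemma case1:
  assumes IH: "\<forall>s'<s. Aprop s'" and b: "bad X g s" and s5: "5 \<le> s"
    and nv: "\<forall>j. 2 \<le> j \<and> j \<le> s-2 \<longrightarrow> \<not> viol X g j" and v1: "viol X g 1"
  shows False
proof -
  have g0: "g 0 = g (s-1)" and inj: "inj_on g {0..<s-1}" and inj1: "inj_on g {1..<s}"
    and W: "\<forall>k\<le>s. PP X g k \<in> W"
    using b by (auto simp: bad_def)
  have mem: "0 \<in> {0..<s-1}" "1 \<in> {0..<s-1}" "2 \<in> {0..<s-1}" using s5 by auto
  have d01: "g 0 \<noteq> g 1" using inj_onD[OF inj _ mem(1) mem(2)] by auto
  have d02: "g 0 \<noteq> g 2" using inj_onD[OF inj _ mem(1) mem(3)] by auto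
  have d12: "g 1 \<noteq> g 2" using inj_onD[OF inj _ mem(2) mem(3)] by auto
  have p3: "PP X g 3 = sd (sd (sd X {g 0}) {g 1}) {g 2}" by (simp add: eval_nat_numeral)
  have wX: "X \<in> W" using W[rule_format, of 0] by simp
  have w1: "sd X {g 0} \<in> W" using W[rule_format, of 1] s5 by simp
  have w3: "PP X g 3 \<in> W" using W[rule_format, of 3] s5 by (simp del: PP.simps)
  have v1': "sd (PP X g 3) {g 0} \<in> W \<or> sd X {g 2} \<in> W"
    using v1 unfolding viol_def by (simp del: PP.simps add: PP.simps(1) numeral_3_eq_3 numeral_2_eq_2)
  have w0: "sd (PP X g 3) {g 0} \<in> W"
  proof (cases "sd X {g 2} \<in> W")
    case False then show ?thesis using v1' by simp
  next
    case True
    have sdY: "sd (sd X {g 2}) (PP X g 3) = {g 0, g 1}"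
      unfolding p3 sd_def using d01 d02 d12 by auto
    have ne: "sd X {g 2} \<noteq> PP X g 3"
    proof
      assume "sd X {g 2} = PP X g 3"
      then have "sd (sd X {g 2}) (PP X g 3) = {}" by (auto simp: sd_def)
      then show False using sdY by simp
    qed
    obtain d where d: "d \<in> {g 0, g 1}" "sd (sd X {g 2}) {d} \<in> W"
      using step[OF True w3 ne] sdY by auto
    show ?thesis
    proof (cases "d = g 0")
      case True
      then have "sd (sd X {g 0}) {g 2} \<in> W" using d(2) sd_comm2 by metis
      then show ?thesis using C4[OF wX d02 w1 \<open>sd X {g 2} \<in> W\<close>] by simp
    next
      case False
      then have "d = g 1" using d(1) by simp
      moreover have "sd (sd X {g 2}) {g 1} = sd (PP X g 3) {g 0}"
        unfolding p3 sd_def using d01 d02 d12 by auto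
      ultimately show ?thesis using d(2) by simp
    qed
  qed
  define h where "h = (\<lambda>i. g (i + 3))"
  have hinj: "inj_on h {0..<s-3}"
    unfolding h_def by (rule inj_shift) (rule inj_on_subset[OF inj1], use s5 in auto)
  have hm: "g 0 = h (s-3-1)" using g0 s5 by (simp add: h_def)
  have hnin: "g 0 \<notin> h ` {0..<s-3-1}"
  proof
    assume "g 0 \<in> h ` {0..<s-3-1}"
    then obtain x where x: "x < s-3-1" "g 0 = g (x+3)" by (auto simp: h_def)
    have "0 = x + 3" by (rule inj_onD[OF inj x(2)]) (use x(1) in auto)
    then show False by simp
  qed
  have hW: "\<forall>k\<le>s-3. PP (PP X g 3) h k \<in> W"
  proof (intro allI impI)
    fix k assume "k \<le> s-3"
    then have "3 + k \<le> s" using s5 by simp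
    then have "PP X g (3 + k) \<in> W" using W by blast
    then show "PP (PP X g 3) h k \<in> W" using PP_shift[of X g 3 k] by (simp del: PP.simps add: h_def)
  qed
  have bad': "bad (sd (PP X g 3) {g 0}) (prep (g 0) h) (s-3+1)"
    by (rule bad_prep_gen[OF _ hm hinj hnin hW w0]) (use s5 in simp)
  have "s - 3 + 1 < s" using s5 by simp
  then have "Aprop (s-3+1)" using IH by simp
  then obtain j where j: "2 \<le> j" "j \<le> s-3+1-2" "viol (sd (PP X g 3) {g 0}) (prep (g 0) h) j"
    using bad' unfolding Aprop_def by blast
  have "viol (PP X g 3) h (j-1)" using j(3) viol_prep[OF j(1)] by simp
  then have "viol X g (j-1+3)" unfolding h_def using viol_shift[of "j-1" X g 3] j(1) by simp
  moreover have "j - 1 + 3 = j + 2" using j(1) by simp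
  ultimately have "viol X g (j+2)" by simp
  moreover have "2 \<le> j+2" "j+2 \<le> s-2" using j s5 by auto
  ultimately show False using nv by blast
qed

lemma prepq:
  assumes IH: "\<forall>s'<s. Aprop s'" and b: "bad X g s" and s5: "5 \<le> s" and lt: "fLT X g s"
    and q1: "1 \<le> q" and qs: "q < s-1" and w: "sd X {g q} \<in> W"
  shows "q = s-2"
proof (rule ccontr)
  assume "q \<noteq> s-2"
  then have qs2: "q + 2 < s" using qs by simp
  have b': "bad (sd X {g q}) (prep (g q) g) (q+2)" by (rule bad_prep[OF b q1 qs w])
  have "Aprop (q+2)" using IH qs2 by simp
  then obtain j where j: "2 \<le> j" "j \<le> q+2-2" "viol (sd X {g q}) (prep (g q) g) j"
    using b' unfolding Aprop_def by blast
  have "viol X g (j-1)" using j(3) viol_prep[OF j(1)] by simp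
  moreover have "1 \<le> j-1" "j-1 \<le> s-2" using j qs by auto
  ultimately show False using lt unfolding fLT_def by blast
qed

lemma rot:
  assumes IH: "\<forall>s'<s. Aprop s'" and b: "bad X g s" and s5: "5 \<le> s" and lt: "fLT X g s"
  shows "\<forall>d \<in> sd X (PP X g s). sd X {d} \<in> W \<longrightarrow> d = g (s-2)"
    and "sd X {g (s-2)} \<in> W"
    and "bad (sd X {g (s-2)}) (prep (g (s-2)) g) s"
    and "fLT (sd X {g (s-2)}) (prep (g (s-2)) g) s"
proof -
  show uniq: "\<forall>d \<in> sd X (PP X g s). sd X {d} \<in> W \<longrightarrow> d = g (s-2)"
  proof (intro ballI impI)
    fix d assume d: "d \<in> sd X (PP X g s)" and w: "sd X {d} \<in> W"
    then have "d \<in> g ` {1..<s-1}" using bad_PP_s[OF b] by simp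
    then obtain q where q: "1 \<le> q" "q < s-1" "d = g q" by auto
    then have "q = s-2" using prepq[OF IH b s5 lt q(1) q(2)] w by simp
    then show "d = g (s-2)" using q by simp
  qed
  have W: "\<forall>k\<le>s. PP X g k \<in> W" using b by (simp add: bad_def)
  have wX: "X \<in> W" using W[rule_format, of 0] by simp
  have wS: "PP X g s \<in> W" using W by simp
  obtain d where "d \<in> sd X (PP X g s)" "sd X {d} \<in> W" using step[OF wX wS bad_ne[OF b]] by blast
  then show w: "sd X {g (s-2)} \<in> W" using uniq by auto
  have "bad (sd X {g (s-2)}) (prep (g (s-2)) g) (s-2+2)"
    by (rule bad_prep[OF b _ _ w]) (use s5 in auto)
  moreover have e: "s - 2 + 2 = s" using s5 by simp
  ultimately show b': "bad (sd X {g (s-2)}) (prep (g (s-2)) g) s" by metis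
  have nv: "\<forall>j. 2 \<le> j \<and> j \<le> s-2 \<longrightarrow> \<not> viol (sd X {g (s-2)}) (prep (g (s-2)) g) j"
  proof (intro allI impI)
    fix j assume j: "2 \<le> j \<and> j \<le> s-2"
    then have "viol (sd X {g (s-2)}) (prep (g (s-2)) g) j = viol X g (j-1)" using viol_prep by simp
    moreover have "1 \<le> j - 1" "j - 1 \<le> s - 2" using j by auto
    ultimately show "\<not> viol (sd X {g (s-2)}) (prep (g (s-2)) g) j" using lt unfolding fLT_def by auto
  qed
  show "fLT (sd X {g (s-2)}) (prep (g (s-2)) g) s"
    unfolding fLT_def
  proof (intro allI impI)
    fix j assume j: "1 \<le> j \<and> j \<le> s-2"
    show "\<not> viol (sd X {g (s-2)}) (prep (g (s-2)) g) j"
    proof (cases "j = 1")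
      case True
      then show ?thesis using case1[OF IH b' s5 nv] by auto
    next
      case False
      then show ?thesis using nv j by auto
    qed
  qed
qed

lemma viol_cong:
  assumes "\<forall>i<s. g i = h i" "j \<le> s-2" "3 \<le> s"
  shows "viol X g j = viol X h j"
proof -
  have "PP X g (j+2) = PP X h (j+2)" by (rule PP_cong) (use assms in auto)
  moreover have "PP X g (j-1) = PP X h (j-1)" by (rule PP_cong) (use assms in auto)
  moreover have "g (j-1) = h (j-1)" "g (j+1) = h (j+1)" using assms by auto
  ultimately show ?thesis unfolding viol_def by simp
qed

lemma bad_cong:
  assumes "\<forall>i<s. g i = h i"
  shows "bad X g s = bad X h s"
proof -
  have a: "3 \<le> s \<Longrightarrow> g 0 = h 0 \<and> g (s-1) = h (s-1)" using assms by auto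
  have b: "inj_on g {0..<s-1} = inj_on h {0..<s-1}" by (rule inj_on_cong) (use assms in auto)
  have c: "inj_on g {1..<s} = inj_on h {1..<s}" by (rule inj_on_cong) (use assms in auto)
  have d: "k \<le> s \<Longrightarrow> PP X g k = PP X h k" for k by (rule PP_cong) (use assms in auto)
  show ?thesis unfolding bad_def using a b c d by auto
qed

lemma fLT_cong:
  assumes "\<forall>i<s. g i = h i" "3 \<le> s"
  shows "fLT X g s = fLT X h s"
  unfolding fLT_def using viol_cong[OF assms(1) _ assms(2)] by auto

lemma cycle_contra:
  assumes IH: "\<forall>s'<s. Aprop s'" and b: "bad X g s" and s5: "5 \<le> s" and lt: "fLT X g s"
  shows False
proof -
  define n where "n = s - 1"
  define h where "h = (\<lambda>k. g (k mod n))"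
  have n4: "4 \<le> n" using s5 by (simp add: n_def)
  have inj: "inj_on g {0..<n}" using b by (simp add: bad_def n_def)
  have g0: "g 0 = g n" using b by (simp add: bad_def n_def)
  have hmodeq: "k mod n = k' mod n \<Longrightarrow> h k = h k'" for k k' by (simp add: h_def)
  have hmod: "\<forall>k. h k = h (k mod n)" by (simp add: h_def)
  have hn: "h (k + n) = h k" for k by (simp add: h_def)
  have hg: "\<forall>k<s. g k = h k"
  proof (intro allI impI)
    fix k assume k: "k < s"
    show "g k = h k"
    proof (cases "k < n")
      case True then show ?thesis by (simp add: h_def)
    next
      case False then have "k = n" using k by (simp add: n_def)
      then show ?thesis using g0 by (simp add: h_def)
    qed
  qed
  have hinj: "inj_on h {0..<n}"
    using inj by (rule iffD1[OF inj_on_cong, rotated]) (simp add: h_def)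
  define A where "A = h ` {0..<n}"
  have Ag: "A = g ` {0..<n}" unfolding A_def h_def by (rule image_cong) auto
  have hcov: "h ` {k..<k+n} = A" for k
  proof -
    have "h ` {k..<k+n} = g ` ((\<lambda>x. x mod n) ` {k..<k+n})" by (auto simp: h_def)
    also have "\<dots> = g ` {0..<n}" using mod_cover[of n k] n4 by simp
    finally show ?thesis using Ag by simp
  qed
  have hinjk: "inj_on h {k..<k+n}" for k
  proof -
    have "inj_on (g \<circ> (\<lambda>x. x mod n)) {k..<k+n}"
      by (rule comp_inj_on[OF mod_inj]) (use inj mod_cover[of n k] n4 in simp)
    then show ?thesis by (simp add: h_def o_def)
  qed
  have Pper: "PP X h (k + n) = sd (PP X h k) A" for k
    using PP_range[OF hinjk[of k], of X] hcov[of k] by simp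
  have Pper2: "PP X h (k + 2*n) = PP X h k" for k
    using Pper[of k] Pper[of "k+n"] by (simp add: mult_2 add.assoc)
  have Pq: "PP X h (r + q*(2*n)) = PP X h r" for r q
  proof (induction q)
    case 0 then show ?case by simp
  next
    case (Suc q)
    have "PP X h (r + Suc q * (2*n)) = PP X h ((r + q*(2*n)) + 2*n)"
      by (rule arg_cong[where f="PP X h"]) simp
    also have "\<dots> = PP X h (r + q*(2*n))" by (rule Pper2)
    finally show ?case using Suc.IH by simp
  qed
  have Pmod: "PP X h k = PP X h (k mod (2*n))" for k
    using Pq[of "k mod (2*n)" "k div (2*n)"] by (simp only: mod_div_mult_eq)
  define T where "T r \<longleftrightarrow> bad (PP X h r) (\<lambda>i. h (i + r)) s \<and> fLT (PP X h r) (\<lambda>i. h (i + r)) s" for r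
  have T2n: "T (2*n)"
  proof -
    have "PP X h (2*n) = X" using Pper2[of 0] by simp
    moreover have "(\<lambda>i. h (i + 2*n)) = h" using hn by (simp add: mult_2 add.assoc[symmetric])
    moreover have "bad X h s" using b bad_cong[OF hg] by simp
    moreover have "fLT X h s" using lt fLT_cong[OF hg] s5 by simp
    ultimately show ?thesis unfolding T_def by simp
  qed
  have Tstep: "T (r-1)" if r1: "1 \<le> r" and Tr: "T r" for r
  proof -
    have br: "bad (PP X h r) (\<lambda>i. h (i + r)) s" and lr: "fLT (PP X h r) (\<lambda>i. h (i + r)) s"
      using Tr unfolding T_def by auto
    have e1: "h (s - 2 + r) = h (r - 1)"
    proof -
      have "s - 2 + r = (r - 1) + n" using r1 s5 by (simp add: n_def)
      then show ?thesis using hn by simp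
    qed
    have rr: "r = Suc (r - 1)" using r1 by simp
    have e2: "sd (PP X h r) {h (r-1)} = PP X h (r-1)"
      by (subst rr) simp
    have e3: "prep (h (r-1)) (\<lambda>i. h (i + r)) = (\<lambda>i. h (i + (r-1)))"
    proof
      fix i show "prep (h (r-1)) (\<lambda>i. h (i + r)) i = h (i + (r-1))"
        using r1 by (cases i) (simp_all add: prep_def)
    qed
    show ?thesis using rot(3)[OF IH br s5 lr] rot(4)[OF IH br s5 lr] e1 e2 e3 unfolding T_def by simp
  qed
  have Tall: "T (2*n - i)" if "i \<le> 2*n" for i
    using that
  proof (induction i)
    case 0 then show ?case using T2n by simp
  next
    case (Suc i)
    then have "T (2*n - i)" by simp
    moreover have "1 \<le> 2*n - i" using Suc.prems by simp
    ultimately have "T (2*n - i - 1)" by (rule Tstep[rotated])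
    then show ?case by simp
  qed
  have Tle: "T r" if "r \<le> 2*n" for r
    using Tall[of "2*n - r"] that by simp
  have N1: "d = h r \<or> d = h (r + n - 1)"
    if r: "1 \<le> r" "r \<le> 2*n" and dA: "d \<in> A" and dw: "sd (PP X h r) {d} \<in> W" for r d
  proof (cases "d = h r")
    case True then show ?thesis by simp
  next
    case False
    have br: "bad (PP X h r) (\<lambda>i. h (i + r)) s" and lr: "fLT (PP X h r) (\<lambda>i. h (i + r)) s"
      using Tle[OF r(2)] unfolding T_def by auto
    have im: "(\<lambda>i. h (i + r)) ` {1..<s-1} = h ` {r+1..<r+n}"
    proof -
      have "(\<lambda>i. i + r) ` {1..<s-1} = {r+1..<r+n}"
      proof
        show "(\<lambda>i. i + r) ` {1..<s-1} \<subseteq> {r+1..<r+n}" by (auto simp: n_def)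
        show "{r+1..<r+n} \<subseteq> (\<lambda>i. i + r) ` {1..<s-1}"
        proof
          fix x assume "x \<in> {r+1..<r+n}"
          then have "x = (x - r) + r" "x - r \<in> {1..<s-1}" by (auto simp: n_def)
          then show "x \<in> (\<lambda>i. i + r) ` {1..<s-1}" by blast
        qed
      qed
      then show ?thesis by (metis image_image)
    qed
    have cov: "A = insert (h r) (h ` {r+1..<r+n})"
    proof -
      have "{r..<r+n} = insert r {r+1..<r+n}" using n4 by auto
      then show ?thesis using hcov[of r] by simp
    qed
    have "d \<in> sd (PP X h r) (PP (PP X h r) (\<lambda>i. h (i + r)) s)"
      using bad_PP_s[OF br] im cov dA False by simp
    then have "d = h (s - 2 + r)" using rot(1)[OF IH br s5 lr] dw by simp
    moreover have "s - 2 + r = r + n - 1" using s5 by (simp add: n_def)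
    ultimately show ?thesis by simp
  qed
  have N: "\<forall>j d. d \<in> h ` {0..<n} \<longrightarrow> sd (PP X h j) {d} \<in> W \<longrightarrow> d = h j \<or> d = h (j + n - 1)"
  proof (intro allI impI)
    fix j d assume dA: "d \<in> h ` {0..<n}" and dw: "sd (PP X h j) {d} \<in> W"
    define r where "r = (if j mod (2*n) = 0 then 2*n else j mod (2*n))"
    have r: "1 \<le> r" "r \<le> 2*n" using n4 by (auto simp: r_def)
    have rm: "r mod (2*n) = j mod (2*n)" by (simp add: r_def)
    have rn: "r mod n = j mod n"
      using rm by (metis mod_mod_cancel dvd_triv_right)
    have P: "PP X h r = PP X h j" using Pmod[of r] Pmod[of j] rm by simp
    have h1: "h r = h j" by (rule hmodeq[OF rn])
    have h2: "h (r + n - 1) = h (j + n - 1)"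
    proof (rule hmodeq)
      have "r + n - 1 = r + (n - 1)" "j + n - 1 = j + (n - 1)" using n4 by auto
      then show "(r + n - 1) mod n = (j + n - 1) mod n" using rn by (metis mod_add_cong)
    qed
    show "d = h j \<or> d = h (j + n - 1)" using N1[OF r _ ] dA dw P h1 h2 unfolding A_def by metis
  qed
  have allW: "\<forall>k. PP X h k \<in> W"
  proof
    fix k
    have "k mod (2*n) \<le> 2*n" using n4 by (simp add: order_less_imp_le)
    then have "bad (PP X h (k mod (2*n))) (\<lambda>i. h (i + k mod (2*n))) s" using Tle unfolding T_def by blast
    then have "\<forall>k'\<le>s. PP (PP X h (k mod (2*n))) (\<lambda>i. h (i + k mod (2*n))) k' \<in> W" unfolding bad_def by blast
    then have "PP (PP X h (k mod (2*n))) (\<lambda>i. h (i + k mod (2*n))) 0 \<in> W" by blast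
    then have "PP X h (k mod (2*n)) \<in> W" by simp
    then show "PP X h k \<in> W" using Pmod by simp
  qed
  have "n = 3" by (rule cyc[OF _ hmod hinj allW N]) (use n4 in simp)
  then show False using n4 by simp
qed

theorem Aall: "Aprop s"
proof (induction s rule: less_induct)
  case (less s)
  show ?case unfolding Aprop_def
  proof (intro allI impI)
    fix X g assume b: "bad X g s"
    then have s3: "3 \<le> s" by (simp add: bad_def)
    show "\<exists>j. 2 \<le> j \<and> j \<le> s-2 \<and> viol X g j"
    proof (cases "s = 3")
      case True then show ?thesis using bad3 b by blast
    next
      case False
      show ?thesis
      proof (cases "s = 4")
        case True
        have g3: "g 3 = g 0" using b True by (simp add: bad_def)
        have "\<forall>k\<le>s. PP X g k \<in> W" using b unfolding bad_def by blast
        then have "PP X g 0 \<in> W" by blast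
        then have wX: "X \<in> W" by simp
        have "viol X g 2" unfolding viol_def using wX g3 by simp
        then show ?thesis using True by auto
      next
        case False
        then have s5: "5 \<le> s" using s3 \<open>s \<noteq> 3\<close> by simp
        have IH: "\<forall>s'<s. Aprop s'" using less.IH by blast
        show ?thesis
        proof (rule ccontr)
          assume "\<not> ?thesis"
          then have nv: "\<forall>j. 2 \<le> j \<and> j \<le> s-2 \<longrightarrow> \<not> viol X g j" by blast
          show False
          proof (cases "viol X g 1")
            case True then show False using case1[OF IH b s5 nv] by simp
          next
            case False
            have "fLT X g s" unfolding fLT_def
            proof (intro allI impI)
              fix j assume j: "1 \<le> j \<and> j \<le> s - 2"
              show "\<not> viol X g j"
              proof (cases "j = 1")
                case True then show ?thesis using False by simp
              next
                case False then show ?thesis using nv j by auto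
              qed
            qed
            then show False using cycle_contra[OF IH b s5] by simp
          qed
        qed
      qed
    qed
  qed
qed

theorem no_bad_LT: "bad X g s \<Longrightarrow> fLT X g s \<Longrightarrow> False"
  using Aall[of s] unfolding Aprop_def fLT_def by fastforce

end


lemma card_sd1:
  assumes "finite S"
  shows "int (card (sd S {x})) = int (card S) + (if x \<in> S then -1 else 1)"
proof (cases "x \<in> S")
  case True
  then have "sd S {x} = S - {x}" by (auto simp: sd_def)
  moreover have "1 \<le> card S" using True assms by (metis One_nat_def Suc_leI card_gt_0_iff empty_iff)
  ultimately show ?thesis using True assms by (simp add: card_Diff_singleton of_nat_diff)
next
  case False
  then have "sd S {x} = insert x S" by (auto simp: sd_def)
  then show ?thesis using False assms by simp
qed

lemma sd_single_eq: "sd A B = {d} \<Longrightarrow> B = sd A {d}"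
proof -
  assume a: "sd A B = {d}"
  have "B = sd A (sd A B)" by simp
  then show "B = sd A {d}" using a by simp
qed

lemma sd_fin: "finite A \<Longrightarrow> finite B \<Longrightarrow> finite (sd A B)"
  by (simp add: sd_def)

lemma sd_tri: "sd A C \<subseteq> sd A B \<union> sd B C"
  by (auto simp: sd_def)

lemma sd_swap: "sd (sd A {d}) C = sd (sd A C) {d}"
  by (auto simp: sd_def)

lemma card_dec:
  assumes "finite X" "finite Z" "card (sd (sd X {d}) Z) < card (sd X Z)"
  shows "d \<in> sd X Z"
proof (rule ccontr)
  assume "d \<notin> sd X Z"
  then have "sd (sd X {d}) Z = insert d (sd X Z)" by (auto simp: sd_def)
  then have "card (sd (sd X {d}) Z) = Suc (card (sd X Z))"
    using \<open>d \<notin> sd X Z\<close> sd_fin[OF assms(1,2)] by simp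
  then show False using assms(3) by simp
qed

locale pcube =
  fixes V :: "'a set" and E :: "'a \<Rightarrow> 'a \<Rightarrow> bool" and f :: "'a \<Rightarrow> nat set"
  assumes gr: "graph V E" and conn: "connected_graph V E"
    and fin: "\<forall>v\<in>V. finite (f v)" and finj: "inj_on f V"
    and iso: "\<forall>u\<in>V. \<forall>v\<in>V. gdist V E u v = card (sd (f u) (f v))"
begin

lemma EV: "E u v \<Longrightarrow> u \<in> V \<and> v \<in> V"
  using gr by (simp add: graph_def)

lemma Esym: "E u v \<Longrightarrow> E v u"
  using gr by (simp add: graph_def)

lemma Eirr: "\<not> E u u"
  using gr by (simp add: graph_def)

lemma walk_gdist:
  assumes "is_walk V E xs"
  shows "gdist V E (hd xs) (last xs) \<le> length xs - 1"
proof -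
  have "xs \<noteq> []" using assms by (simp add: is_walk_def)
  then have "length xs = Suc (length xs - 1)" by simp
  then have "\<exists>ys. is_walk V E ys \<and> hd ys = hd xs \<and> last ys = last xs \<and> length ys = Suc (length xs - 1)"
    using assms by blast
  then show ?thesis unfolding gdist_def by (rule Least_le)
qed

lemma gdist_ex:
  assumes "u \<in> V" "v \<in> V"
  shows "\<exists>xs. is_walk V E xs \<and> hd xs = u \<and> last xs = v \<and> length xs = Suc (gdist V E u v)"
proof -
  obtain xs where xs: "is_walk V E xs" "hd xs = u" "last xs = v"
    using conn assms unfolding connected_graph_def by blast
  then have "length xs = Suc (length xs - 1)" by (cases xs) (auto simp: is_walk_def)
  then have "\<exists>n xs. is_walk V E xs \<and> hd xs = u \<and> last xs = v \<and> length xs = Suc n" using xs by blast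
  then show ?thesis unfolding gdist_def by (rule LeastI_ex)
qed

lemma edge_card:
  assumes "E u v"
  shows "card (sd (f u) (f v)) = 1"
proof -
  have uv: "u \<in> V" "v \<in> V" using EV[OF assms] by auto
  have w: "is_walk V E [u, v]" using assms uv by (auto simp: is_walk_def less_Suc_eq)
  have "gdist V E u v \<le> 1" using walk_gdist[OF w] by simp
  then have le: "card (sd (f u) (f v)) \<le> 1" using iso uv by simp
  have "u \<noteq> v" using assms Eirr by auto
  then have "f u \<noteq> f v" using finj uv by (auto simp: inj_on_def)
  then have "sd (f u) (f v) \<noteq> {}" by (auto simp: sd_def)
  moreover have "finite (sd (f u) (f v))" using fin uv by (simp add: sd_fin)
  ultimately have "card (sd (f u) (f v)) \<noteq> 0" by simp
  then show ?thesis using le by simp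
qed

lemma edge_coord:
  assumes "E u v"
  shows "\<exists>d. sd (f u) (f v) = {d} \<and> f v = sd (f u) {d}"
proof -
  obtain d where "sd (f u) (f v) = {d}" using edge_card[OF assms] by (auto simp: card_1_singleton_iff)
  then show ?thesis using sd_single_eq by blast
qed

lemma card1_edge:
  assumes "u \<in> V" "v \<in> V" "card (sd (f u) (f v)) = 1"
  shows "E u v"
proof -
  have g1: "gdist V E u v = 1" using iso assms by simp
  obtain xs where xs0: "is_walk V E xs" "hd xs = u" "last xs = v" "length xs = Suc (gdist V E u v)"
    using gdist_ex[OF assms(1,2)] by blast
  have xs: "is_walk V E xs" "hd xs = u" "last xs = v" "length xs = 2" using xs0 g1 by simp_all
  have ne: "xs \<noteq> []" using xs(4) by auto
  have "E (xs ! 0) (xs ! Suc 0)" using xs(1,4) unfolding is_walk_def by simp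
  moreover have "xs ! 0 = u" using xs(2) ne by (simp add: hd_conv_nth)
  moreover have "xs ! Suc 0 = v" using xs(3,4) ne by (simp add: last_conv_nth)
  ultimately show ?thesis by simp
qed

lemma flip_edge:
  assumes "u \<in> V" "w \<in> V" "f w = sd (f u) {d}"
  shows "E u w"
  using card1_edge[OF assms(1,2)] assms(3) by simp

lemma Wstep:
  assumes "X \<in> f ` V" "Z \<in> f ` V" "X \<noteq> Z"
  shows "\<exists>d \<in> sd X Z. sd X {d} \<in> f ` V"
proof -
  obtain x z where xz: "x \<in> V" "z \<in> V" "X = f x" "Z = f z" using assms by auto
  obtain xs where xs: "is_walk V E xs" "hd xs = x" "last xs = z" "length xs = Suc (gdist V E x z)"
    using gdist_ex[OF xz(1,2)] by blast
  have "gdist V E x z \<noteq> 0"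
  proof
    assume "gdist V E x z = 0"
    then have "card (sd X Z) = 0" using iso xz by simp
    moreover have "finite (sd X Z)" using fin xz by (simp add: sd_fin)
    ultimately have "sd X Z = {}" by simp
    then show False using assms(3) by (auto simp: sd_def)
  qed
  then have l2: "2 \<le> length xs" using xs by simp
  have ne: "xs \<noteq> []" using l2 by auto
  have "E (xs ! 0) (xs ! Suc 0)" using xs(1) l2 unfolding is_walk_def by simp
  moreover have "xs ! 0 = x" using xs(2) ne by (simp add: hd_conv_nth)
  ultimately have e: "E x (xs ! 1)" by simp
  have dw: "is_walk V E (drop 1 xs)"
    unfolding is_walk_def
  proof (intro conjI allI impI)
    show "drop 1 xs \<noteq> []" using l2 by simp
    show "set (drop 1 xs) \<subseteq> V" using xs(1) set_drop_subset[of 1 xs] unfolding is_walk_def by blast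
    fix i assume "Suc i < length (drop 1 xs)"
    then show "E (drop 1 xs ! i) (drop 1 xs ! Suc i)" using xs(1) unfolding is_walk_def by simp
  qed
  have "gdist V E (hd (drop 1 xs)) (last (drop 1 xs)) \<le> length (drop 1 xs) - 1"
    by (rule walk_gdist[OF dw])
  moreover have "hd (drop 1 xs) = xs ! 1" using l2 by (simp add: hd_drop_conv_nth)
  moreover have "last (drop 1 xs) = z" using l2 xs by simp
  ultimately have lt: "gdist V E (xs ! 1) z < gdist V E x z" using xs l2 by simp
  obtain d where d: "f (xs!1) = sd (f x) {d}" using edge_coord[OF e] by blast
  have m: "xs ! 1 \<in> V" using EV[OF e] by simp
  have "card (sd (sd X {d}) Z) < card (sd X Z)" using lt iso xz m d by simp
  moreover have "finite X" "finite Z" using fin xz by auto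
  ultimately have "d \<in> sd X Z" using card_dec by blast
  moreover have "sd X {d} \<in> f ` V" using d m xz by auto
  ultimately show ?thesis by blast
qed

lemma walk_drop:
  assumes "is_walk V E xs" "p < length xs"
  shows "is_walk V E (drop p xs)"
  unfolding is_walk_def
proof (intro conjI allI impI)
  show "drop p xs \<noteq> []" using assms(2) by (simp add: drop_eq_Nil)
  show "set (drop p xs) \<subseteq> V" using assms(1) set_drop_subset[of p xs] unfolding is_walk_def by blast
  fix i assume "Suc i < length (drop p xs)"
  then show "E (drop p xs ! i) (drop p xs ! Suc i)" using assms(1) unfolding is_walk_def by simp
qed

lemma walk_take:
  assumes "is_walk V E xs" "p < length xs"
  shows "is_walk V E (take (Suc p) xs)"
  unfolding is_walk_def
proof (intro conjI allI impI)
  show "take (Suc p) xs \<noteq> []" using assms(2) by (cases xs) auto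
  show "set (take (Suc p) xs) \<subseteq> V" using assms(1) set_take_subset[of "Suc p" xs] unfolding is_walk_def by blast
  fix i assume "Suc i < length (take (Suc p) xs)"
  then show "E (take (Suc p) xs ! i) (take (Suc p) xs ! Suc i)" using assms(1) unfolding is_walk_def by simp
qed

lemma fV: "v \<in> V \<Longrightarrow> finite (f v)"
  using fin by simp

lemma tri:
  assumes "u \<in> V" "m \<in> V" "v \<in> V"
  shows "gdist V E u v \<le> gdist V E u m + gdist V E m v"
proof -
  have "card (sd (f u) (f v)) \<le> card (sd (f u) (f m) \<union> sd (f m) (f v))"
    by (rule card_mono) (use fV assms sd_tri in \<open>auto simp: sd_fin\<close>)
  also have "\<dots> \<le> card (sd (f u) (f m)) + card (sd (f m) (f v))" by (rule card_Un_le)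
  finally show ?thesis using iso assms by simp
qed

lemma SP:
  assumes sp: "shortest_path V E u v xs" and p: "p < length xs"
  shows "gdist V E (xs ! p) v = length xs - 1 - p" and "xs ! p \<in> V"
proof -
  have w: "is_walk V E xs" and hd: "hd xs = u" and la: "last xs = v" and len: "length xs = Suc (gdist V E u v)"
    using sp by (auto simp: shortest_path_def is_path_def)
  have ne: "xs \<noteq> []" using p by auto
  show xpV: "xs ! p \<in> V" using w p unfolding is_walk_def by (meson nth_mem subsetD)
  have uV: "u \<in> V" using w ne hd unfolding is_walk_def by (metis hd_in_set subsetD)
  have vV: "v \<in> V" using w ne la unfolding is_walk_def by (metis last_in_set subsetD)
  have a: "gdist V E (xs ! p) v \<le> length xs - 1 - p"
  proof -
    have "gdist V E (hd (drop p xs)) (last (drop p xs)) \<le> length (drop p xs) - 1"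
      by (rule walk_gdist[OF walk_drop[OF w p]])
    moreover have "hd (drop p xs) = xs ! p" using p by (simp add: hd_drop_conv_nth)
    moreover have "last (drop p xs) = v" using p la by simp
    ultimately show ?thesis by simp
  qed
  have b: "gdist V E u (xs ! p) \<le> p"
  proof -
    have "gdist V E (hd (take (Suc p) xs)) (last (take (Suc p) xs)) \<le> length (take (Suc p) xs) - 1"
      by (rule walk_gdist[OF walk_take[OF w p]])
    moreover have "hd (take (Suc p) xs) = u" using hd ne by simp
    moreover have "last (take (Suc p) xs) = xs ! p" using p by (simp add: take_Suc_conv_app_nth)
    ultimately show ?thesis using p by simp
  qed
  have "gdist V E u v \<le> gdist V E u (xs ! p) + gdist V E (xs ! p) v" by (rule tri[OF uV xpV vV])
  then show "gdist V E (xs ! p) v = length xs - 1 - p" using a b len by linarith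
qed

lemma bridge:
  assumes n2: "2 \<le> n" and hp: "\<forall>k. h k = h (k mod n)" and hinj: "inj_on h {0..<n}"
    and allW: "\<forall>k. PP X h k \<in> f ` V"
    and N: "\<forall>j d. d \<in> h ` {0..<n} \<longrightarrow> sd (PP X h j) {d} \<in> f ` V \<longrightarrow> d = h j \<or> d = h (j + n - 1)"
  shows "convex_cycle V E (map (\<lambda>k. inv_into V f (PP X h k)) [0..<2*n])
         \<and> length (map (\<lambda>k. inv_into V f (PP X h k)) [0..<2*n]) = 2*n"
proof -
  have n0: "0 < n" using n2 by simp
  define c where "c k = inv_into V f (PP X h k)" for k
  define cs where "cs = map c [0..<2*n]"
  have csd: "map (\<lambda>k. inv_into V f (PP X h k)) [0..<2*n] = cs" unfolding cs_def c_def by simp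
  have cV: "c k \<in> V" for k using allW unfolding c_def by (meson inv_into_into)
  have fc: "f (c k) = PP X h k" for k using allW unfolding c_def by (simp add: f_inv_into_f)
  have cmod: "c k = c (k mod (2*n))" for k unfolding c_def using per_PPmod[OF n0 hp hinj, of X k] by simp
  have ceq: "c i = c j" if "PP X h i = PP X h j" for i j unfolding c_def using that by simp
  have len: "length cs = 2*n" by (simp add: cs_def)
  have nth: "cs ! i = c i" if "i < 2*n" for i using that by (simp add: cs_def)
  have setcs: "set cs = c ` {0..<2*n}" by (simp add: cs_def)
  have cin: "c k \<in> set cs" for k
  proof -
    have "k mod (2*n) \<in> {0..<2*n}" using n0 by simp
    then show ?thesis using cmod[of k] setcs by auto
  qed
  have edge: "E (c k) (c (Suc k))" for k
    by (rule flip_edge[OF cV cV]) (simp add: fc)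
  have ce1: "{c k, c (Suc k)} \<in> cycle_edges cs" for k
  proof -
    define i where "i = k mod (2*n)"
    have i: "i < 2*n" using n0 by (simp add: i_def)
    have "cs ! i = c k" using nth[OF i] cmod[of k] by (simp add: i_def)
    moreover have "cs ! (Suc i mod length cs) = c (Suc k)"
    proof -
      have "Suc i mod (2*n) < 2*n" using n0 by simp
      then have "cs ! (Suc i mod length cs) = c (Suc i mod (2*n))" using nth len by simp
      also have "Suc i mod (2*n) = Suc k mod (2*n)" by (simp add: i_def mod_Suc_eq)
      finally show ?thesis using cmod[of "Suc k"] by simp
    qed
    ultimately have "{c k, c (Suc k)} = {cs ! i, cs ! (Suc i mod length cs)} \<and> i < length cs"
      using i len by simp
    then show ?thesis unfolding cycle_edges_def by blast
  qed
  have prevPP: "PP X h (k + 2*n - 1) = sd (PP X h k) {h (k + n - 1)}" for k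
  proof -
    define m where "m = k + 2*n - 1"
    have sm: "Suc m = k + 2*n" using n0 by (simp add: m_def)
    have "PP X h (Suc m) = PP X h k" using sm per_PP2[OF n0 hp hinj, of X k] by simp
    then have "sd (PP X h m) {h m} = PP X h k" by simp
    then have a: "PP X h m = sd (PP X h k) {h m}" by (metis sd_sd_same)
    have "m = (k + n - 1) + n" using n0 by (simp add: m_def)
    then have "h m = h (k + n - 1)" using per_shift[OF hp] by simp
    then show ?thesis using a by (simp add: m_def)
  qed
  have ce2: "{c k, c (k + 2*n - 1)} \<in> cycle_edges cs" for k
  proof -
    have "Suc (k + 2*n - 1) = k + 2*n" using n0 by simp
    then have "c (Suc (k + 2*n - 1)) = c k" using per_PP2[OF n0 hp hinj, of X k] ceq by metis
    then show ?thesis using ce1[of "k + 2*n - 1"] by (simp add: insert_commute)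
  qed
  have KS: "w = c (Suc j) \<or> w = c (j + 2*n - 1)"
    if e: "E (c j) w" and lt: "gdist V E w (c i) < gdist V E (c j) (c i)" for i j w
  proof -
    obtain d where d: "f w = sd (f (c j)) {d}" using edge_coord[OF e] by blast
    have wV: "w \<in> V" using EV[OF e] by simp
    have "card (sd (sd (f (c j)) {d}) (f (c i))) < card (sd (f (c j)) (f (c i)))"
      using lt iso wV cV d by simp
    then have dd: "d \<in> sd (f (c j)) (f (c i))" using card_dec fV cV by blast
    have "sd (PP X h j) (PP X h i) \<subseteq> sd X (PP X h j) \<union> sd X (PP X h i)" by (auto simp: sd_def)
    moreover have "d \<in> sd (PP X h j) (PP X h i)" using dd fc by simp
    ultimately have "d \<in> sd X (PP X h j) \<union> sd X (PP X h i)" by blast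
    then have dA: "d \<in> h ` {0..<n}" using per_range[OF hp n0, of X j] per_range[OF hp n0, of X i] by blast
    have dW: "sd (PP X h j) {d} \<in> f ` V" using d wV fc by (metis image_eqI)
    from N dA dW have "d = h j \<or> d = h (j + n - 1)" by blast
    then show ?thesis
    proof
      assume "d = h j"
      then have "f w = f (c (Suc j))" using d fc by simp
      then show ?thesis using finj wV cV by (metis inj_onD)
    next
      assume "d = h (j + n - 1)"
      then have "f w = f (c (j + 2*n - 1))" using d fc prevPP by simp
      then show ?thesis using finj wV cV by (metis inj_onD)
    qed
  qed
  have cinj: "inj_on c {0..<2*n}"
  proof (rule inj_onI)
    fix i j assume i: "i \<in> {0..<2*n}" and j: "j \<in> {0..<2*n}" and e: "c i = c j"
    have P: "PP X h i = PP X h j" using e fc by metis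
    show "i = j"
    proof (rule ccontr)
      assume "i \<noteq> j"
      { fix a b assume ab: "a < b" "b < 2*n" "PP X h a = PP X h b"
        have False
        proof (cases "b - a \<le> n")
          case True
          then show False using per_ne[OF n0 hp hinj, of "b - a" X a] ab by simp
        next
          case False
          have "PP X h (b + (a + 2*n - b)) = PP X h (a + 2*n)" using ab by simp
          also have "\<dots> = PP X h a" by (rule per_PP2[OF n0 hp hinj])
          moreover have "0 < a + 2*n - b" "a + 2*n - b \<le> n" using ab False by auto
          ultimately show False using per_ne[OF n0 hp hinj, of "a + 2*n - b" X b] ab by simp
        qed }
      then show False using i j P \<open>i \<noteq> j\<close> by (metis atLeastLessThan_iff linorder_neqE_nat)
    qed
  qed
  have dist: "distinct cs" unfolding cs_def using cinj by (simp add: distinct_map)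
  have isc: "is_cycle V E cs"
    unfolding is_cycle_def
  proof (intro conjI allI impI)
    show "3 \<le> length cs" using len n2 by simp
    show "distinct cs" by (rule dist)
    show "set cs \<subseteq> V" using setcs cV by auto
    fix i assume i: "i < length cs"
    have "cs ! (Suc i mod length cs) = c (Suc i mod (2*n))" using nth len n0 by simp
    also have "\<dots> = c (Suc i)" using cmod[of "Suc i"] by simp
    finally show "E (cs ! i) (cs ! (Suc i mod length cs))" using nth[of i] i len edge by simp
  qed
  have conv: "convex_sub V E (set cs) (cycle_edges cs)"
    unfolding convex_sub_def
  proof (intro ballI allI impI)
    fix u v xs assume u: "u \<in> set cs" and v: "v \<in> set cs" and sp: "shortest_path V E u v xs"
    obtain i where vi: "v = c i" using v setcs by auto
    have w: "is_walk V E xs" and hd: "hd xs = u" and ne: "xs \<noteq> []"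
      using sp by (auto simp: shortest_path_def is_path_def is_walk_def)
    have claim: "\<forall>p. p < length xs \<longrightarrow> (\<exists>j. xs ! p = c j)"
    proof (intro allI)
      fix p show "p < length xs \<longrightarrow> (\<exists>j. xs ! p = c j)"
      proof (induction p)
        case 0
        show ?case using hd ne u setcs by (auto simp: hd_conv_nth)
      next
        case (Suc p)
        show ?case
        proof
          assume sp1: "Suc p < length xs"
          then obtain j where j: "xs ! p = c j" using Suc.IH by auto
          have e: "E (c j) (xs ! Suc p)" using w sp1 j unfolding is_walk_def by metis
          have "gdist V E (xs ! Suc p) v < gdist V E (xs ! p) v"
            using SP(1)[OF sp sp1] SP(1)[of u v xs p] sp sp1 by simp
          then have "xs ! Suc p = c (Suc j) \<or> xs ! Suc p = c (j + 2*n - 1)"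
            using KS[OF e] j vi by simp
          then show "\<exists>j. xs ! Suc p = c j" by blast
        qed
      qed
    qed
    show "set xs \<subseteq> set cs \<and> (\<forall>i. Suc i < length xs \<longrightarrow> {xs ! i, xs ! Suc i} \<in> cycle_edges cs)"
    proof
      show "set xs \<subseteq> set cs"
      proof
        fix x assume "x \<in> set xs"
        then obtain p where "p < length xs" "x = xs ! p" by (metis in_set_conv_nth)
        then show "x \<in> set cs" using claim cin by metis
      qed
      show "\<forall>i. Suc i < length xs \<longrightarrow> {xs ! i, xs ! Suc i} \<in> cycle_edges cs"
      proof (intro allI impI)
        fix p assume sp1: "Suc p < length xs"
        then have "p < length xs" by simp
        then obtain j where j: "xs ! p = c j" using claim by blast
        have e: "E (c j) (xs ! Suc p)" using w sp1 j unfolding is_walk_def by metis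
        have "gdist V E (xs ! Suc p) v < gdist V E (xs ! p) v"
          using SP(1)[OF sp sp1] SP(1)[of u v xs p] sp sp1 by simp
        then have "xs ! Suc p = c (Suc j) \<or> xs ! Suc p = c (j + 2*n - 1)"
          using KS[OF e] j vi by simp
        then show "{xs ! p, xs ! Suc p} \<in> cycle_edges cs" using ce1 ce2 j by auto
      qed
    qed
  qed
  show ?thesis unfolding csd convex_cycle_def using isc conv len by simp
qed

lemma theta_iff:
  assumes ab: "E a b" and uv: "E u v"
  shows "Theta V E (a, b) (u, v) \<longleftrightarrow> sd (f a) (f b) = sd (f u) (f v)"
proof -
  obtain \<alpha> where al: "sd (f a) (f b) = {\<alpha>}" "f b = sd (f a) {\<alpha>}" using edge_coord[OF ab] by blast
  obtain \<beta> where be: "sd (f u) (f v) = {\<beta>}" "f v = sd (f u) {\<beta>}" using edge_coord[OF uv] by blast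
  have V: "a \<in> V" "b \<in> V" "u \<in> V" "v \<in> V" using EV[OF ab] EV[OF uv] by auto
  define D where "D = sd (f a) (f u)"
  have finD: "finite D" unfolding D_def using fV V by (simp add: sd_fin)
  have g1: "gdist V E a u = card D" using iso V by (simp add: D_def)
  have g2: "gdist V E b v = card (sd (sd D {\<alpha>}) {\<beta>})"
  proof -
    have "sd (f b) (f v) = sd (sd D {\<alpha>}) {\<beta>}" unfolding al(2) be(2) D_def by (auto simp: sd_def)
    then show ?thesis using iso V by simp
  qed
  have g3: "gdist V E a v = card (sd D {\<beta>})"
  proof -
    have "sd (f a) (f v) = sd D {\<beta>}" unfolding be(2) D_def by (auto simp: sd_def)
    then show ?thesis using iso V by simp
  qed
  have g4: "gdist V E b u = card (sd D {\<alpha>})"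
  proof -
    have "sd (f b) (f u) = sd D {\<alpha>}" unfolding al(2) D_def by (auto simp: sd_def)
    then show ?thesis using iso V by simp
  qed
  have finDa: "finite (sd D {\<alpha>})" using finD by (simp add: sd_fin)
  have c1: "int (card (sd D {\<alpha>})) = int (card D) + (if \<alpha> \<in> D then -1 else 1)" by (rule card_sd1[OF finD])
  have c2: "int (card (sd D {\<beta>})) = int (card D) + (if \<beta> \<in> D then -1 else 1)" by (rule card_sd1[OF finD])
  have c3: "int (card (sd (sd D {\<alpha>}) {\<beta>})) = int (card (sd D {\<alpha>})) + (if \<beta> \<in> sd D {\<alpha>} then -1 else 1)"
    by (rule card_sd1[OF finDa])
  have th: "Theta V E (a, b) (u, v) \<longleftrightarrow>
      int (card D) + int (card (sd (sd D {\<alpha>}) {\<beta>})) \<noteq> int (card (sd D {\<beta>})) + int (card (sd D {\<alpha>}))"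
    unfolding Theta_def using g1 g2 g3 g4 by (simp only: prod.case) linarith
  show ?thesis
  proof (cases "\<alpha> = \<beta>")
    case True
    have "\<beta> \<in> sd D {\<alpha>} \<longleftrightarrow> \<alpha> \<notin> D" using True by (auto simp: sd_def)
    then show ?thesis using th c1 c2 c3 True al(1) be(1) by (auto split: if_splits)
  next
    case False
    have "\<beta> \<in> sd D {\<alpha>} \<longleftrightarrow> \<beta> \<in> D" using False by (auto simp: sd_def)
    then have "Theta V E (a, b) (u, v) \<longleftrightarrow> False" using th c1 c2 c3 by (auto split: if_splits)
    then show ?thesis using False al(1) be(1) by simp
  qed
qed

lemma Fclass_eq:
  assumes "E a b" "E x y" "sd (f a) (f b) = sd (f x) (f y)"
  shows "Fclass V E (a, b) = Fclass V E (x, y)"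
  unfolding Fclass_def using theta_iff[OF assms(1)] theta_iff[OF assms(2)] assms(3) by auto

lemma main:
  assumes cyc6: "\<forall>cs. convex_cycle V E cs \<longrightarrow> length cs = 6"
    and pth: "is_path V E p" and len4: "4 \<le> length p" and t2: "type_II V E p"
  shows "shortest_path V E (hd p) (last p) p"
proof -
  interpret W: wfam "f ` V"
  proof
    fix X Z assume "X \<in> f ` V" "Z \<in> f ` V" "X \<noteq> Z"
    then show "\<exists>d\<in>sd X Z. sd X {d} \<in> f ` V" by (rule Wstep)
  next
    fix n h X
    assume a: "2 \<le> n" "\<forall>k. h k = h (k mod n)" "inj_on h {0..<n}" "\<forall>k. PP X h k \<in> f ` V"
      "\<forall>j d. d \<in> h ` {0..<n} \<longrightarrow> sd (PP X h j) {d} \<in> f ` V \<longrightarrow> d = h j \<or> d = h (j + n - 1)"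
    have "2 * n = 6" using bridge[OF a] cyc6 by metis
    then show "n = 3" by simp
  qed
  have w: "is_walk V E p" and dp: "distinct p" using pth by (auto simp: is_path_def)
  have pV: "p ! i \<in> V" if "i < length p" for i using w that unfolding is_walk_def by (meson nth_mem subsetD)
  have pE: "E (p ! i) (p ! Suc i)" if "Suc i < length p" for i using w that unfolding is_walk_def by blast
  define \<gamma> where "\<gamma> i = the_elem (sd (f (p ! i)) (f (p ! Suc i)))" for i
  have gam: "sd (f (p ! i)) (f (p ! Suc i)) = {\<gamma> i} \<and> f (p ! Suc i) = sd (f (p ! i)) {\<gamma> i}"
    if si: "Suc i < length p" for i
  proof -
    obtain d where d: "sd (f (p ! i)) (f (p ! Suc i)) = {d}" "f (p ! Suc i) = sd (f (p ! i)) {d}"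
      using edge_coord[OF pE[OF si]] by blast
    then have "\<gamma> i = d" by (simp add: \<gamma>_def)
    then show ?thesis using d by simp
  qed
  have PPp: "PP (f (p ! i)) (\<lambda>t. \<gamma> (t + i)) k = f (p ! (i + k))" if "i + k < length p" for i k
    using that
  proof (induction k)
    case 0 then show ?case by simp
  next
    case (Suc k)
    then have "PP (f (p ! i)) (\<lambda>t. \<gamma> (t + i)) k = f (p ! (i + k))" by simp
    moreover have "f (p ! Suc (i + k)) = sd (f (p ! (i + k))) {\<gamma> (i + k)}" using gam Suc.prems by simp
    ultimately show ?case by (simp add: add.commute)
  qed
  define L where "L = length p - 1"
  have L3: "3 \<le> L" using len4 by (simp add: L_def)
  have pne: "p \<noteq> []" using len4 by auto
  have hdp: "hd p = p ! 0" using pne by (simp add: hd_conv_nth)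
  have lastp: "last p = p ! L" using pne by (simp add: L_def last_conv_nth)
  show ?thesis
  proof (cases "inj_on \<gamma> {0..<L}")
    case True
    have "PP (f (p ! 0)) \<gamma> (0 + L) = sd (PP (f (p ! 0)) \<gamma> 0) (\<gamma> ` {0..<0+L})"
      by (rule PP_range) (use True in simp)
    moreover have "PP (f (p ! 0)) \<gamma> L = f (p ! L)" using PPp[of 0 L] len4 by (simp add: L_def)
    ultimately have "f (p ! L) = sd (f (p ! 0)) (\<gamma> ` {0..<L})" by simp
    then have "card (sd (f (p ! 0)) (f (p ! L))) = L" using card_image[OF True] by simp
    moreover have "p ! 0 \<in> V" "p ! L \<in> V" using pV[of 0] pV[of L] len4 pne by (simp_all add: L_def)
    ultimately have "gdist V E (hd p) (last p) = L" using iso hdp lastp by simp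
    then show ?thesis unfolding shortest_path_def using pth len4 by (simp add: L_def)
  next
    case False
    define D where "D = {d. \<exists>i. 0 < d \<and> i + d < L \<and> \<gamma> i = \<gamma> (i + d)}"
    have Dne: "\<exists>d. d \<in> D"
    proof -
      obtain x y where xy: "x \<in> {0..<L}" "y \<in> {0..<L}" "x \<noteq> y" "\<gamma> x = \<gamma> y"
        using False unfolding inj_on_def by blast
      show ?thesis
      proof (cases "x < y")
        case True
        then have "y - x \<in> D" unfolding D_def using xy by (intro CollectI exI[of _ x]) auto
        then show ?thesis by blast
      next
        case False
        then have "x - y \<in> D" unfolding D_def using xy by (intro CollectI exI[of _ y]) auto
        then show ?thesis by blast
      qed
    qed
    define m where "m = (LEAST d. d \<in> D)"
    have mD: "m \<in> D" unfolding m_def using Dne by (metis LeastI)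
    have mmin: "d \<notin> D" if "d < m" for d using that unfolding m_def using not_less_Least by blast
    obtain i0 where i0: "0 < m" "i0 + m < L" "\<gamma> i0 = \<gamma> (i0 + m)" using mD unfolding D_def by blast
    have noeq: "\<gamma> (x + i0) \<noteq> \<gamma> (y + i0)" if "x < y" "y - x < m" "y + i0 < L" for x y
    proof
      assume ee: "\<gamma> (x + i0) = \<gamma> (y + i0)"
      have "x + i0 + (y - x) = y + i0" using that by simp
      then have "0 < y - x \<and> x + i0 + (y - x) < L \<and> \<gamma> (x + i0) = \<gamma> (x + i0 + (y - x))"
        using ee that by (simp add: add.commute)
      then have "y - x \<in> D" unfolding D_def by blast
      then show False using mmin that by blast
    qed
    define X0 where "X0 = f (p ! i0)"
    define g where "g = (\<lambda>t. \<gamma> (t + i0))"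
    define s where "s = m + 1"
    have PPg: "PP X0 g k = f (p ! (i0 + k))" if "k \<le> s" for k
      unfolding X0_def g_def by (rule PPp) (use that i0 in \<open>simp add: s_def L_def\<close>)
    have m2: "2 \<le> m"
    proof (rule ccontr)
      assume "\<not> 2 \<le> m"
      then have m1: "m = 1" using i0 by simp
      have "f (p ! (i0 + 2)) = PP X0 g 2" using PPg[of 2] by (simp add: s_def m1)
      also have "\<dots> = sd (sd X0 {g 0}) {g 1}" by (simp add: eval_nat_numeral)
      also have "\<dots> = X0" using i0 m1 by (simp add: g_def add.commute)
      finally have "f (p ! (i0 + 2)) = f (p ! i0)" by (simp add: X0_def)
      moreover have "i0 + 2 < length p" "i0 < length p" using i0 m1 by (auto simp: L_def)
      ultimately have "p ! (i0 + 2) = p ! i0" using finj pV by (metis inj_onD)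
      then show False using dp \<open>i0 + 2 < length p\<close> \<open>i0 < length p\<close> by (simp add: nth_eq_iff_index_eq)
    qed
    have bad: "W.bad X0 g s"
      unfolding W.bad_def
    proof (intro conjI)
      show "3 \<le> s" using m2 by (simp add: s_def)
      show "g 0 = g (s - 1)" using i0 by (simp add: g_def s_def add.commute)
      show "inj_on g {0..<s - 1}"
      proof (rule inj_onI)
        fix x y assume x: "x \<in> {0..<s-1}" and y: "y \<in> {0..<s-1}" and e: "g x = g y"
        show "x = y"
        proof (rule ccontr)
          assume "x \<noteq> y"
          then consider "x < y" | "y < x" by linarith
          then show False
          proof cases
            case 1 then show False using noeq[of x y] x y e i0 by (simp add: g_def s_def; arith)
          next
            case 2 then show False using noeq[of y x] x y e i0 by (simp add: g_def s_def; arith)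
          qed
        qed
      qed
      show "inj_on g {1..<s}"
      proof (rule inj_onI)
        fix x y assume x: "x \<in> {1..<s}" and y: "y \<in> {1..<s}" and e: "g x = g y"
        show "x = y"
        proof (rule ccontr)
          assume "x \<noteq> y"
          then consider "x < y" | "y < x" by linarith
          then show False
          proof cases
            case 1 then show False using noeq[of x y] x y e i0 by (simp add: g_def s_def; arith)
          next
            case 2 then show False using noeq[of y x] x y e i0 by (simp add: g_def s_def; arith)
          qed
        qed
      qed
      show "\<forall>k\<le>s. PP X0 g k \<in> f ` V"
      proof (intro allI impI)
        fix k assume k: "k \<le> s"
        have "i0 + k < length p" using k i0 by (simp add: s_def L_def)
        then show "PP X0 g k \<in> f ` V" using PPg[OF k] pV by simp
      qed
    qed
    have lt: "W.fLT X0 g s"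
      unfolding W.fLT_def
    proof (intro allI impI notI)
      fix j assume j: "1 \<le> j \<and> j \<le> s - 2" and v: "W.viol X0 g j"
      define i' where "i' = i0 + j"
      have i'1: "1 \<le> i'" and i'2: "i' \<le> length p - 3" using j i0 by (auto simp: i'_def s_def L_def)
      have "j + 2 \<le> s" "j - 1 \<le> s" using j by (auto simp: s_def)
      then have P2: "PP X0 g (j+2) = f (p ! (i' + 2))" and P1: "PP X0 g (j-1) = f (p ! (i' - 1))"
        using PPg[of "j+2"] PPg[of "j-1"] j by (simp_all del: PP.simps add: i'_def add.assoc)
      have G1: "g (j-1) = \<gamma> (i' - 1)" using j by (simp add: g_def i'_def add.commute)
      have G2: "g (j+1) = \<gamma> (i' + 1)" by (simp add: g_def i'_def add.commute)
      have ia: "Suc (i' - 1) = i'" using i'1 by simp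
      have lp: "i' + 2 < length p" using i'2 len4 by simp
      have tt: "Fclass V E (p ! (i' - 1), p ! i') \<notin> Fvert V E (p ! (i' + 2))
          \<and> Fclass V E (p ! (i' + 1), p ! (i' + 2)) \<notin> Fvert V E (p ! (i' - 1))"
        using t2 i'1 i'2 unfolding type_II_def by blast
      from v have "sd (f (p ! (i' + 2))) {\<gamma> (i' - 1)} \<in> f ` V \<or> sd (f (p ! (i' - 1))) {\<gamma> (i' + 1)} \<in> f ` V"
        unfolding W.viol_def P2 P1 G1 G2 .
      then show False
      proof
        assume "sd (f (p ! (i' + 2))) {\<gamma> (i' - 1)} \<in> f ` V"
        then obtain w where wV: "w \<in> V" and fw: "f w = sd (f (p ! (i' + 2))) {\<gamma> (i' - 1)}" by force
        have e: "E (p ! (i' + 2)) w" by (rule flip_edge[OF pV[OF lp] wV fw])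
        have e0: "E (p ! (i' - 1)) (p ! i')" using pE[of "i' - 1"] ia lp by simp
        have "sd (f (p ! (i' - 1))) (f (p ! i')) = {\<gamma> (i' - 1)}" using gam[of "i' - 1"] ia lp by simp
        moreover have "sd (f (p ! (i' + 2))) (f w) = {\<gamma> (i' - 1)}" unfolding fw by simp
        ultimately have "Fclass V E (p ! (i' - 1), p ! i') = Fclass V E (p ! (i' + 2), w)"
          using Fclass_eq[OF e0 e] by simp
        then have "Fclass V E (p ! (i' - 1), p ! i') \<in> Fvert V E (p ! (i' + 2))"
          unfolding Fvert_def using e by blast
        then show False using tt by blast
      next
        assume "sd (f (p ! (i' - 1))) {\<gamma> (i' + 1)} \<in> f ` V"
        then obtain w where wV: "w \<in> V" and fw: "f w = sd (f (p ! (i' - 1))) {\<gamma> (i' + 1)}" by force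
        have l1: "i' - 1 < length p" using lp by simp
        have e: "E (p ! (i' - 1)) w" by (rule flip_edge[OF pV[OF l1] wV fw])
        have e0: "E (p ! (i' + 1)) (p ! (i' + 2))" using pE[of "i' + 1"] lp by simp
        have "sd (f (p ! (i' + 1))) (f (p ! (i' + 2))) = {\<gamma> (i' + 1)}" using gam[of "i' + 1"] lp by simp
        moreover have "sd (f (p ! (i' - 1))) (f w) = {\<gamma> (i' + 1)}" unfolding fw by simp
        ultimately have "Fclass V E (p ! (i' + 1), p ! (i' + 2)) = Fclass V E (p ! (i' - 1), w)"
          using Fclass_eq[OF e0 e] by simp
        then have "Fclass V E (p ! (i' + 1), p ! (i' + 2)) \<in> Fvert V E (p ! (i' - 1))"
          unfolding Fvert_def using e by blast
        then show False using tt by blast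
      qed
    qed
    show ?thesis using W.no_bad_LT[OF bad lt] by simp
  qed
qed

end

theorem mainTheorem6:
  fixes V :: "'a set" and E :: "'a \<Rightarrow> 'a \<Rightarrow> bool" and p :: "'a list"
  assumes "finite V"
    and "partial_cube V E"
    and "\<forall>cs. convex_cycle V E cs \<longrightarrow> length cs = 6"
    and "is_path V E p" and "length p \<ge> 4"
    and "type_II V E p"
  shows "shortest_path V E (hd p) (last p) p"
proof -
  obtain f :: "'a \<Rightarrow> nat set" where f: "\<forall>v\<in>V. finite (f v)" "inj_on f V"
    "\<forall>u\<in>V. \<forall>v\<in>V. gdist V E u v = card ((f u - f v) \<union> (f v - f u))"
    using assms(2) unfolding partial_cube_def by blast
  have g: "graph V E" and c: "connected_graph V E" using assms(2) unfolding partial_cube_def by auto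
  interpret pcube V E f
  proof
    show "graph V E" by (rule g)
    show "connected_graph V E" by (rule c)
    show "\<forall>v\<in>V. finite (f v)" by (rule f(1))
    show "inj_on f V" by (rule f(2))
    show "\<forall>u\<in>V. \<forall>v\<in>V. gdist V E u v = card (sd (f u) (f v))" using f(3) by (simp add: sd_def)
  qed
  show ?thesis by (rule main[OF assms(3) assms(4) assms(5) assms(6)])
qed

end
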